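(* In the publishing problem, assume the delay cost is global (a single non-negative function $C^{(d)}$), the gas price is constant, i.e. $R(P)=P$ with probability $1$ and $P_t=P$ for all $t$, and the publishing cost is constant, $C^{(p)}_t(N)=\beta\,\mathbb{1}[N\neq\emptyset]$. Then an optimal policy is to publish all pending transactions at constant intervals of length $n^*$ (i.e. consecutive publication steps are $n^*$ steps apart), where $$n^*\in\arg\min_{n\ge1}\frac{F^{(d)}(n)+\gamma^{n-1}\beta P}{1-\gamma^n}.$$
   Context: The publishing problem is the following infinite-horizon MDP in discrete time $t=0,1,2,\dots$. At each step $t$ a new transaction $H_t$ is created. The state at time $t$ is $(t,P_t,Q_t)$ with gas price $P_t\ge0$ and set $Q_t$ of unpublished transactions ($Q_0=\emptyset$). A policy $\pi$ chooses $N^\pi_t\subseteq Q_t$ to publish, incurring cost $C_t=P_t\,C^{(p)}_t(N^\pi_t)+C^{(d)}_t(Q_t\setminus N^\pi_t)$; then $Q_{t+1}=(Q_t\setminus N^\pi_t)\cup\{H_t\}$ and $P_{t+1}=R(P_t)$ for a random function $R$. Publishing cost: $C^{(p)}_t(N)=\alpha|N|+\beta\,\mathbb{1}[N\ne\emptyset]$, $\alpha,\beta\ge0$ (here $\alpha=0$). Delay cost: $C^{(d)}_t(N)=\sum_{H_\tau\in N}C^{(d)}_{H_\tau}(t-\tau)$ with non-negative functions $C^{(d)}_{H_\tau}$; it is global if all $C^{(d)}_{H_\tau}$ equal one function $C^{(d)}$. The expected total cost is $C(\pi)=\mathbb{E}[\sum_t\gamma^tC_t]$ with $0<\gamma<1$,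 and a policy is optimal if it minimizes $C(\pi)$. The aggregated delay cost is $F^{(d)}(n)=\sum_{t=1}^{n-1}\sum_{i=1}^{t}\gamma^{t-1}C^{(d)}(i)$. *)

theory Defs
  imports Complex_Main "HOL-Library.Extended_Nonnegative_Real"
begin

text \<open>Transaction H_t is identified with
  its creation time t. A policy is the sequence N of sets published at each step.\<close>

primrec queue :: "(nat \<Rightarrow> nat set) \<Rightarrow> nat \<Rightarrow> nat set" where
  "queue N 0 = {}"
| "queue N (Suc t) = (queue N t - N t) \<union> {t}"

definition feasible :: "(nat \<Rightarrow> nat set) \<Rightarrow> bool" where
  "feasible N \<longleftrightarrow> (\<forall>t. N t \<subseteq> queue N t)"

definition step_cost :: "real \<Rightarrow> real \<Rightarrow> (nat \<Rightarrow> real) \<Rightarrow> (nat \<Rightarrow> nat set) \<Rightarrow> nat \<Rightarrow> real" where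
  "step_cost P \<beta> Cd N t =
     P * (\<beta> * (if N t = {} then 0 else 1)) + (\<Sum>\<tau>\<in>queue N t - N t. Cd (t - \<tau>))"

definition total_cost :: "real \<Rightarrow> real \<Rightarrow> real \<Rightarrow> (nat \<Rightarrow> real) \<Rightarrow> (nat \<Rightarrow> nat set) \<Rightarrow> ennreal" where
  "total_cost \<gamma> P \<beta> Cd N = (\<Sum>t. ennreal (\<gamma> ^ t * step_cost P \<beta> Cd N t))"

definition optimal :: "real \<Rightarrow> real \<Rightarrow> real \<Rightarrow> (nat \<Rightarrow> real) \<Rightarrow> (nat \<Rightarrow> nat set) \<Rightarrow> bool" where
  "optimal \<gamma> P \<beta> Cd N \<longleftrightarrow> feasible N \<and>
     (\<forall>N'. feasible N' \<longrightarrow> total_cost \<gamma> P \<beta> Cd N \<le> total_cost \<gamma> P \<beta> Cd N')"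

definition F_d :: "real \<Rightarrow> (nat \<Rightarrow> real) \<Rightarrow> nat \<Rightarrow> real" where
  "F_d \<gamma> Cd n = (\<Sum>t=1..n-1. \<Sum>i=1..t. \<gamma> ^ (t - 1) * Cd i)"

definition periodic_publish :: "nat \<Rightarrow> (nat \<Rightarrow> nat set) \<Rightarrow> bool" where
  "periodic_publish n N \<longleftrightarrow> (\<forall>t. N t = (if n dvd t then queue N t else {}))"

end

theory Submission
  imports Defs
begin

definition Dsum :: "(nat \<Rightarrow> real) \<Rightarrow> nat \<Rightarrow> real" where
  "Dsum Cd m = (\<Sum>i=1..m. Cd i)"

lemma F_Suc:
  assumes "1 \<le> d"
  shows "F_d \<gamma> Cd (Suc d) = F_d \<gamma> Cd d + \<gamma> ^ (d - 1) * Dsum Cd d"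
proof -
  obtain m where m: "d = Suc m" using assms by (cases d) auto
  show ?thesis
    unfolding F_d_def Dsum_def m
    by (simp add: sum_distrib_left distrib_left)
qed

lemma F_one: "F_d \<gamma> Cd 1 = 0"
  unfolding F_d_def by simp

lemma F_mono:
  assumes "m \<le> n" "0 \<le> \<gamma>" "\<And>i. 0 \<le> Cd i"
  shows "F_d \<gamma> Cd m \<le> F_d \<gamma> Cd n"
  unfolding F_d_def
  by (rule sum_mono2) (use assms in \<open>auto intro!: sum_nonneg mult_nonneg_nonneg\<close>)

lemma F_nonneg:
  assumes "0 \<le> \<gamma>" "\<And>i. 0 \<le> Cd i"
  shows "0 \<le> F_d \<gamma> Cd n"
  unfolding F_d_def using assms by (auto intro!: sum_nonneg mult_nonneg_nonneg)

lemma reindex: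
  assumes "a \<le> t"
  shows "(\<Sum>\<tau>\<in>{a..<t}. Cd (t - \<tau>)) = Dsum Cd (t - a)"
  unfolding Dsum_def
  by (rule sum.reindex_bij_witness[where i="\<lambda>i. t - i" and j="\<lambda>\<tau>. t - \<tau>"]) (use assms in auto)

lemma pow_split:
  fixes \<gamma> :: real
  assumes "k + e = m"
  shows "\<gamma> ^ k * \<gamma> ^ e = \<gamma> ^ m"
  using assms by (simp add: power_add[symmetric])

lemma pot_lower:
  fixes d :: "nat \<Rightarrow> nat" and pub :: "nat \<Rightarrow> bool" and \<gamma> c \<beta> P :: real
  assumes g0: "0 < \<gamma>"
  and d1: "d 1 = 1"
  and step: "\<And>t. 1 \<le> t \<Longrightarrow> (pub t \<and> d (Suc t) = 1) \<or> (\<not> pub t \<and> d (Suc t) = Suc (d t))"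
  and key: "\<And>n. 1 \<le> n \<Longrightarrow> c * (1 - \<gamma>^n) \<le> F_d \<gamma> Cd n + \<gamma>^(n-1)*\<beta>*P"
  shows "1 \<le> d (Suc T) \<and> d (Suc T) \<le> Suc T \<and>
    \<gamma>*c \<le> (\<Sum>t\<in>{1..<Suc T}. \<gamma>^t * (if pub t then \<beta>*P else Dsum Cd (d t)))
       + \<gamma>^(Suc T + 1 - d (Suc T)) * (c - F_d \<gamma> Cd (d (Suc T)))"
proof (induction T)
  case 0
  then show ?case using d1 by (simp add: F_d_def)
next
  case (Suc T)
  define e where "e = d (Suc T)"
  define S where "S = (\<Sum>t\<in>{1..<Suc T}. \<gamma>^t * (if pub t then \<beta>*P else Dsum Cd (d t)))"
  have e1: "1 \<le> e" and eT: "e \<le> Suc T" and IH: "\<gamma>*c \<le> S + \<gamma>^(Suc T + 1 - e) * (c - F_d \<gamma> Cd e)"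
    using Suc.IH unfolding e_def S_def by auto
  have sumS: "(\<Sum>t\<in>{1..<Suc (Suc T)}. \<gamma>^t * (if pub t then \<beta>*P else Dsum Cd (d t)))
      = S + \<gamma>^(Suc T) * (if pub (Suc T) then \<beta>*P else Dsum Cd e)"
    unfolding S_def e_def by simp
  have gk: "0 \<le> \<gamma>^(Suc T + 1 - e)" using g0 by simp
  have st: "(pub (Suc T) \<and> d (Suc (Suc T)) = 1) \<or> (\<not> pub (Suc T) \<and> d (Suc (Suc T)) = Suc (d (Suc T)))"
    using step[of "Suc T"] by simp
  from st show ?case
  proof
    assume A: "pub (Suc T) \<and> d (Suc (Suc T)) = 1"
    have k: "c - F_d \<gamma> Cd e \<le> \<gamma>^(e-1)*\<beta>*P + \<gamma>^e * c"
      using key[OF e1] by (simp add: algebra_simps)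
    have "\<gamma>^(Suc T + 1 - e) * (c - F_d \<gamma> Cd e) \<le> \<gamma>^(Suc T + 1 - e) * (\<gamma>^(e-1)*\<beta>*P + \<gamma>^e * c)"
      by (rule mult_left_mono[OF k gk])
    also have "\<dots> = (\<gamma>^(Suc T + 1 - e) * \<gamma>^(e-1))*\<beta>*P + (\<gamma>^(Suc T + 1 - e) * \<gamma>^e) * c"
      by (simp add: algebra_simps)
    also have "\<dots> = \<gamma>^(Suc T)*\<beta>*P + \<gamma>^(Suc T + 1) * c"
      using e1 eT by (simp add: pow_split)
    finally have "\<gamma>*c \<le> S + \<gamma>^(Suc T)*\<beta>*P + \<gamma>^(Suc T + 1) * c" using IH by linarith
    then show ?thesis using A sumS by (simp add: F_d_def mult.assoc)
  next
    assume A: "\<not> pub (Suc T) \<and> d (Suc (Suc T)) = Suc (d (Suc T))"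
    have "\<gamma>^(Suc (Suc T) + 1 - d (Suc (Suc T))) * (c - F_d \<gamma> Cd (d (Suc (Suc T))))
        = \<gamma>^(Suc T + 1 - e) * (c - F_d \<gamma> Cd e - \<gamma>^(e-1) * Dsum Cd e)"
      using A e1 eT by (simp add: e_def F_Suc)
    also have "\<dots> = \<gamma>^(Suc T + 1 - e) * (c - F_d \<gamma> Cd e) - (\<gamma>^(Suc T + 1 - e) * \<gamma>^(e-1)) * Dsum Cd e"
      by (simp add: algebra_simps)
    also have "\<dots> = \<gamma>^(Suc T + 1 - e) * (c - F_d \<gamma> Cd e) - \<gamma>^(Suc T) * Dsum Cd e"
      using e1 eT by (simp add: pow_split)
    finally show ?thesis using A sumS IH e1 eT unfolding e_def by simp
  qed
qed


lemma pot_eq: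
  fixes d :: "nat \<Rightarrow> nat" and pub :: "nat \<Rightarrow> bool" and \<gamma> c \<beta> P :: real
  assumes g0: "0 < \<gamma>"
  and d1: "d 1 = 1"
  and step: "\<And>t. 1 \<le> t \<Longrightarrow> (pub t \<and> d (Suc t) = 1) \<or> (\<not> pub t \<and> d (Suc t) = Suc (d t))"
  and key: "\<And>t. 1 \<le> t \<Longrightarrow> pub t \<Longrightarrow> c * (1 - \<gamma>^(d t)) = F_d \<gamma> Cd (d t) + \<gamma>^(d t - 1)*\<beta>*P"
  shows "1 \<le> d (Suc T) \<and> d (Suc T) \<le> Suc T \<and>
    \<gamma>*c = (\<Sum>t\<in>{1..<Suc T}. \<gamma>^t * (if pub t then \<beta>*P else Dsum Cd (d t)))
       + \<gamma>^(Suc T + 1 - d (Suc T)) * (c - F_d \<gamma> Cd (d (Suc T)))"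
proof (induction T)
  case 0
  then show ?case using d1 by (simp add: F_d_def)
next
  case (Suc T)
  define e where "e = d (Suc T)"
  define S where "S = (\<Sum>t\<in>{1..<Suc T}. \<gamma>^t * (if pub t then \<beta>*P else Dsum Cd (d t)))"
  have e1: "1 \<le> e" and eT: "e \<le> Suc T" and IH: "\<gamma>*c = S + \<gamma>^(Suc T + 1 - e) * (c - F_d \<gamma> Cd e)"
    using Suc.IH unfolding e_def S_def by auto
  have sumS: "(\<Sum>t\<in>{1..<Suc (Suc T)}. \<gamma>^t * (if pub t then \<beta>*P else Dsum Cd (d t)))
      = S + \<gamma>^(Suc T) * (if pub (Suc T) then \<beta>*P else Dsum Cd e)"
    unfolding S_def e_def by simp
  have gk: "0 \<le> \<gamma>^(Suc T + 1 - e)" using g0 by simp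
  have st: "(pub (Suc T) \<and> d (Suc (Suc T)) = 1) \<or> (\<not> pub (Suc T) \<and> d (Suc (Suc T)) = Suc (d (Suc T)))"
    using step[of "Suc T"] by simp
  from st show ?case
  proof
    assume A: "pub (Suc T) \<and> d (Suc (Suc T)) = 1"
    have k: "c - F_d \<gamma> Cd e = \<gamma>^(e-1)*\<beta>*P + \<gamma>^e * c"
      using key[of "Suc T"] A unfolding e_def by (simp add: algebra_simps)
    have "\<gamma>^(Suc T + 1 - e) * (c - F_d \<gamma> Cd e) = \<gamma>^(Suc T + 1 - e) * (\<gamma>^(e-1)*\<beta>*P + \<gamma>^e * c)"
      by (simp add: k)
    also have "\<dots> = (\<gamma>^(Suc T + 1 - e) * \<gamma>^(e-1))*\<beta>*P + (\<gamma>^(Suc T + 1 - e) * \<gamma>^e) * c"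
      by (simp add: algebra_simps)
    also have "\<dots> = \<gamma>^(Suc T)*\<beta>*P + \<gamma>^(Suc T + 1) * c"
      using e1 eT by (simp add: pow_split)
    finally have "\<gamma>*c = S + \<gamma>^(Suc T)*\<beta>*P + \<gamma>^(Suc T + 1) * c" using IH by linarith
    then show ?thesis using A sumS by (simp add: F_d_def mult.assoc)
  next
    assume A: "\<not> pub (Suc T) \<and> d (Suc (Suc T)) = Suc (d (Suc T))"
    have "\<gamma>^(Suc (Suc T) + 1 - d (Suc (Suc T))) * (c - F_d \<gamma> Cd (d (Suc (Suc T))))
        = \<gamma>^(Suc T + 1 - e) * (c - F_d \<gamma> Cd e - \<gamma>^(e-1) * Dsum Cd e)"
      using A e1 eT by (simp add: e_def F_Suc)
    also have "\<dots> = \<gamma>^(Suc T + 1 - e) * (c - F_d \<gamma> Cd e) - (\<gamma>^(Suc T + 1 - e) * \<gamma>^(e-1)) * Dsum Cd e"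
      by (simp add: algebra_simps)
    also have "\<dots> = \<gamma>^(Suc T + 1 - e) * (c - F_d \<gamma> Cd e) - \<gamma>^(Suc T) * Dsum Cd e"
      using e1 eT by (simp add: pow_split)
    finally show ?thesis using A sumS IH e1 eT unfolding e_def by simp
  qed
qed


primrec bstart :: "(nat \<Rightarrow> nat set) \<Rightarrow> nat \<Rightarrow> nat" where
  "bstart N 0 = 0"
| "bstart N (Suc t) = (if N t \<noteq> {} then t else bstart N t)"

lemma bstart_le: "bstart N t \<le> t"
  by (induction t) auto

lemma bstart_less: "1 \<le> t \<Longrightarrow> bstart N t < t"
  by (cases t) (auto simp: le_imp_less_Suc bstart_le)

lemma queue_sub: "queue N t \<subseteq> {..<t}"
  by (induction t) auto

lemma bstart_queue: "{bstart N t..<t} \<subseteq> queue N t"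
proof (induction t)
  case 0 then show ?case by simp
next
  case (Suc t)
  show ?case
  proof (cases "N t = {}")
    case True
    then have "{bstart N (Suc t)..<Suc t} = {bstart N t..<t} \<union> {t}"
      using bstart_le[of N t] by auto
    then show ?thesis using Suc True by auto
  next
    case False then show ?thesis by auto
  qed
qed

lemma step_cost_nonneg:
  assumes "0 \<le> P" "0 \<le> \<beta>" "\<And>i. 0 \<le> Cd i"
  shows "0 \<le> step_cost P \<beta> Cd N t"
  unfolding step_cost_def using assms by (auto intro!: sum_nonneg add_nonneg_nonneg)

lemma lower_bound:
  fixes \<gamma> P \<beta> c :: real and Cd :: "nat \<Rightarrow> real"
  assumes g0: "0 < \<gamma>" and g1: "\<gamma> < 1" and P0: "0 \<le> P" and b0: "0 \<le> \<beta>"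
    and Cd0: "\<And>i. 0 \<le> Cd i"
    and key: "\<And>n. 1 \<le> n \<Longrightarrow> c * (1 - \<gamma>^n) \<le> F_d \<gamma> Cd n + \<gamma>^(n-1)*\<beta>*P"
  shows "ennreal (\<gamma>*c) \<le> total_cost \<gamma> P \<beta> Cd N"
proof -
  define d where "d t = t - bstart N t" for t
  define pub where "pub t = (N t \<noteq> {})" for t
  define h where "h t = (if pub t then \<beta>*P else Dsum Cd (d t))" for t
  define K where "K = \<beta>*P + \<gamma>*c"
  have d1: "d 1 = 1" unfolding d_def by simp
  have step: "(pub t \<and> d (Suc t) = 1) \<or> (\<not> pub t \<and> d (Suc t) = Suc (d t))" if "1 \<le> t" for t
    unfolding d_def pub_def using bstart_le[of N t] by auto
  have hle: "h t \<le> step_cost P \<beta> Cd N t" if "1 \<le> t" for t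
  proof (cases "pub t")
    case True
    then show ?thesis unfolding h_def step_cost_def pub_def using Cd0
      by (auto intro!: sum_nonneg)
  next
    case False
    have fin: "finite (queue N t)" using queue_sub[of N t] finite_subset by blast
    have "Dsum Cd (d t) = (\<Sum>\<tau>\<in>{bstart N t..<t}. Cd (t - \<tau>))"
      unfolding d_def using reindex[OF bstart_le[of N t], of Cd] by simp
    also have "\<dots> \<le> (\<Sum>\<tau>\<in>queue N t. Cd (t - \<tau>))"
      by (rule sum_mono2[OF fin bstart_queue]) (use Cd0 in auto)
    finally show ?thesis using False unfolding h_def step_cost_def pub_def by simp
  qed
  have part: "\<gamma>*c - \<gamma>^T * K \<le> (\<Sum>t<T. \<gamma>^t * step_cost P \<beta> Cd N t)" for T
  proof (cases T)
    case 0
    have "c * (1 - \<gamma>^1) \<le> F_d \<gamma> Cd 1 + \<gamma>^0*\<beta>*P" using key[of 1] by simp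
    then have "c * (1 - \<gamma>) \<le> \<beta>*P" by (simp add: F_d_def)
    then show ?thesis using 0 P0 b0 unfolding K_def by (simp add: algebra_simps)
  next
    case (Suc T')
    from pot_lower[OF g0 d1 step key, of T']
    have e1: "1 \<le> d (Suc T')" and eT: "d (Suc T') \<le> Suc T'" and
      I: "\<gamma>*c \<le> (\<Sum>t\<in>{1..<Suc T'}. \<gamma>^t * h t) + \<gamma>^(Suc T' + 1 - d (Suc T')) * (c - F_d \<gamma> Cd (d (Suc T')))"
      unfolding h_def by auto
    define e where "e = d (Suc T')"
    have k: "c - F_d \<gamma> Cd e \<le> \<gamma>^(e-1)*\<beta>*P + \<gamma>^e * c"
      using key[of e] e1 unfolding e_def by (simp add: algebra_simps)
    have gk: "0 \<le> \<gamma>^(Suc T' + 1 - e)" using g0 by simp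
    have "\<gamma>^(Suc T' + 1 - e) * (c - F_d \<gamma> Cd e) \<le> \<gamma>^(Suc T' + 1 - e) * (\<gamma>^(e-1)*\<beta>*P + \<gamma>^e * c)"
      by (rule mult_left_mono[OF k gk])
    also have "\<dots> = (\<gamma>^(Suc T' + 1 - e) * \<gamma>^(e-1))*\<beta>*P + (\<gamma>^(Suc T' + 1 - e) * \<gamma>^e) * c"
      by (simp add: algebra_simps)
    also have "\<dots> = \<gamma>^(Suc T')*\<beta>*P + \<gamma>^(Suc T' + 1) * c"
      using e1 eT unfolding e_def by (simp add: pow_split)
    also have "\<dots> = \<gamma>^T * K" unfolding K_def Suc by (simp add: algebra_simps)
    finally have A: "\<gamma>*c - \<gamma>^T * K \<le> (\<Sum>t\<in>{1..<Suc T'}. \<gamma>^t * h t)" using I unfolding e_def by linarith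
    have "(\<Sum>t\<in>{1..<Suc T'}. \<gamma>^t * h t) \<le> (\<Sum>t\<in>{1..<Suc T'}. \<gamma>^t * step_cost P \<beta> Cd N t)"
      by (rule sum_mono) (use hle g0 in \<open>auto intro!: mult_left_mono\<close>)
    also have "\<dots> \<le> (\<Sum>t<T. \<gamma>^t * step_cost P \<beta> Cd N t)"
      unfolding Suc
      by (rule sum_mono2) (use g0 step_cost_nonneg[OF P0 b0 Cd0] in auto)
    finally show ?thesis using A by linarith
  qed
  have nn: "0 \<le> \<gamma>^t * step_cost P \<beta> Cd N t" for t
    using g0 step_cost_nonneg[OF P0 b0 Cd0] by simp
  have tc: "total_cost \<gamma> P \<beta> Cd N = (SUP T. ennreal (\<Sum>t<T. \<gamma>^t * step_cost P \<beta> Cd N t))"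
    unfolding total_cost_def suminf_eq_SUP using nn by simp
  have lim: "(\<lambda>T. ennreal (\<gamma>*c - \<gamma>^T * K)) \<longlonglongrightarrow> ennreal (\<gamma>*c - 0 * K)"
    using g0 g1 by (intro tendsto_intros) simp
  show ?thesis
  proof (rule LIMSEQ_le_const2[OF lim[simplified]])
    show "\<exists>M. \<forall>T\<ge>M. ennreal (\<gamma>*c - \<gamma>^T * K) \<le> total_cost \<gamma> P \<beta> Cd N"
    proof (intro exI allI impI)
      fix T :: nat
      have "ennreal (\<gamma>*c - \<gamma>^T * K) \<le> ennreal (\<Sum>t<T. \<gamma>^t * step_cost P \<beta> Cd N t)"
        by (rule ennreal_leI[OF part])
      also have "\<dots> \<le> (SUP T. ennreal (\<Sum>t<T. \<gamma>^t * step_cost P \<beta> Cd N t))"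
        by (rule SUP_upper) simp
      finally show "ennreal (\<gamma>*c - \<gamma>^T * K) \<le> total_cost \<gamma> P \<beta> Cd N" unfolding tc .
    qed
  qed
qed

theorem theorem1:
  fixes \<gamma> P \<beta> :: real and Cd :: "nat \<Rightarrow> real" and nstar :: nat
  assumes "0 < \<gamma>" and "\<gamma> < 1"
    and "0 \<le> P" and "0 \<le> \<beta>"
    and "\<And>i. 0 \<le> Cd i"
    and "1 \<le> nstar"
    and "\<And>n. 1 \<le> n \<Longrightarrow>
           (F_d \<gamma> Cd nstar + \<gamma> ^ (nstar - 1) * \<beta> * P) / (1 - \<gamma> ^ nstar)
             \<le> (F_d \<gamma> Cd n + \<gamma> ^ (n - 1) * \<beta> * P) / (1 - \<gamma> ^ n)"
  shows "\<exists>N. periodic_publish nstar N \<and> optimal \<gamma> P \<beta> Cd N"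
proof -
  note g0 = assms(1) and g1 = assms(2) and P0 = assms(3) and b0 = assms(4) and Cd0 = assms(5)
    and n1 = assms(6)
  have gm: "0 < 1 - \<gamma>^m" if "1 \<le> m" for m
  proof -
    have "\<gamma>^m < 1" using g0 g1 that by (simp add: power_less_one_iff)
    then show ?thesis by simp
  qed
  define c where "c = (F_d \<gamma> Cd nstar + \<gamma> ^ (nstar - 1) * \<beta> * P) / (1 - \<gamma> ^ nstar)"
  have key: "c * (1 - \<gamma>^m) \<le> F_d \<gamma> Cd m + \<gamma>^(m-1)*\<beta>*P" if "1 \<le> m" for m
    using assms(7)[OF that] gm[OF that] unfolding c_def by (simp add: pos_le_divide_eq)
  have keq: "c * (1 - \<gamma>^nstar) = F_d \<gamma> Cd nstar + \<gamma>^(nstar-1)*\<beta>*P"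
    using gm[OF n1] unfolding c_def by simp
  have Fn0: "0 \<le> F_d \<gamma> Cd nstar" using F_nonneg[of \<gamma> Cd] g0 Cd0 by simp
  have num0: "0 \<le> \<gamma>^(nstar-1)*\<beta>*P" using g0 b0 P0 by simp
  have cF: "F_d \<gamma> Cd d \<le> c" if "d \<le> nstar" for d
  proof -
    have "F_d \<gamma> Cd d \<le> F_d \<gamma> Cd nstar" using F_mono[OF that, of \<gamma> Cd] g0 Cd0 by simp
    also have "\<dots> \<le> c * (1 - \<gamma>^nstar)" using keq num0 by simp
    also have "\<dots> \<le> c"
    proof -
      have "0 \<le> c" unfolding c_def using Fn0 num0 gm[OF n1] by simp
      moreover have "0 \<le> \<gamma>^nstar" using g0 by simp
      ultimately show ?thesis by (simp add: mult_left_le)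
    qed
    finally show ?thesis .
  qed
  define dP where "dP t = Suc ((t - 1) mod nstar)" for t
  define Q where "Q t = {t - dP t..<t}" for t
  define NP where "NP t = (if nstar dvd t then Q t else {})" for t
  have dPle: "dP t \<le> t" if "1 \<le> t" for t
    using that unfolding dP_def by (cases t) (auto simp: le_imp_less_Suc)
  have dPn: "dP t \<le> nstar" for t
    unfolding dP_def using n1 by (simp add: Suc_leI)
  have dPstep: "(nstar dvd t \<and> dP (Suc t) = 1) \<or> (\<not> nstar dvd t \<and> dP (Suc t) = Suc (dP t))"
    if t1: "1 \<le> t" for t
  proof -
    obtain m where m: "t = Suc m" using t1 not0_implies_Suc[of t] by auto
    show ?thesis
      unfolding dP_def m using mod_Suc[of m nstar]
      by (auto simp: dvd_eq_mod_eq_0 split: if_splits)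
  qed
  have dPdvd: "dP t = nstar" if t1: "1 \<le> t" and dv: "nstar dvd t" for t
  proof -
    obtain m where m: "t = Suc m" using t1 not0_implies_Suc[of t] by auto
    show ?thesis
      using dv unfolding dP_def m using mod_Suc[of m nstar]
      by (auto simp: dvd_eq_mod_eq_0 split: if_splits)
  qed
  have qNP: "queue NP t = Q t" for t
  proof (induction t)
    case 0 then show ?case unfolding Q_def by simp
  next
    case (Suc t)
    show ?case
    proof (cases "nstar dvd t")
      case True
      then have "dP (Suc t) = 1" unfolding dP_def by (simp add: dvd_eq_mod_eq_0)
      then show ?thesis using Suc True unfolding NP_def Q_def by auto
    next
      case False
      then have t1: "1 \<le> t" by (cases t) auto
      with dPstep[OF t1] False have "dP (Suc t) = Suc (dP t)" by auto
      then have "Q (Suc t) = Q t \<union> {t}" unfolding Q_def using dPle[OF t1] by auto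
      then show ?thesis using Suc False unfolding NP_def by auto
    qed
  qed
  have per: "periodic_publish nstar NP"
    unfolding periodic_publish_def by (simp add: qNP NP_def)
  have feas: "feasible NP"
    unfolding feasible_def by (simp add: qNP NP_def)
  define h where "h t = (if nstar dvd t then \<beta>*P else Dsum Cd (dP t))" for t
  have cost: "step_cost P \<beta> Cd NP t = h t" if "1 \<le> t" for t
  proof (cases "nstar dvd t")
    case True
    have "dP t \<ge> 1" unfolding dP_def by simp
    then have "Q t \<noteq> {}" using dPle[OF that] that unfolding Q_def by auto
    then show ?thesis using True unfolding step_cost_def h_def NP_def qNP by simp
  next
    case False
    have "(\<Sum>\<tau>\<in>Q t. Cd (t - \<tau>)) = Dsum Cd (t - (t - dP t))"
      unfolding Q_def by (rule reindex) simp
    also have "\<dots> = Dsum Cd (dP t)" using dPle[OF that] by simp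
    finally show ?thesis using False unfolding step_cost_def h_def NP_def qNP by simp
  qed
  have cost0: "step_cost P \<beta> Cd NP 0 = 0"
    unfolding step_cost_def NP_def qNP Q_def by simp
  have dP1: "dP 1 = 1" unfolding dP_def by simp
  have upper: "total_cost \<gamma> P \<beta> Cd NP \<le> ennreal (\<gamma>*c)"
  proof -
    have nn: "0 \<le> \<gamma>^t * step_cost P \<beta> Cd NP t" for t
      using g0 step_cost_nonneg[OF P0 b0 Cd0] by simp
    have part: "(\<Sum>t<T. \<gamma>^t * step_cost P \<beta> Cd NP t) \<le> \<gamma>*c" for T
    proof (cases T)
      case 0
      have "0 \<le> c" unfolding c_def using Fn0 num0 gm[OF n1] by simp
      then show ?thesis using 0 g0 by simp
    next
      case (Suc T')
      have E: "\<gamma>*c = (\<Sum>t\<in>{1..<Suc T'}. \<gamma>^t * h t)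
         + \<gamma>^(Suc T' + 1 - dP (Suc T')) * (c - F_d \<gamma> Cd (dP (Suc T')))"
        using pot_eq[OF g0 dP1 dPstep, of c Cd \<beta> P T'] dPdvd keq
        unfolding h_def by auto
      have "0 \<le> \<gamma>^(Suc T' + 1 - dP (Suc T')) * (c - F_d \<gamma> Cd (dP (Suc T')))"
        using g0 cF[OF dPn] by simp
      then have A: "(\<Sum>t\<in>{1..<Suc T'}. \<gamma>^t * h t) \<le> \<gamma>*c" using E by linarith
      have "{..<Suc T'} = insert 0 {1..<Suc T'}" by auto
      then have "(\<Sum>t<T. \<gamma>^t * step_cost P \<beta> Cd NP t) = (\<Sum>t\<in>{1..<Suc T'}. \<gamma>^t * step_cost P \<beta> Cd NP t)"
        unfolding Suc by (simp add: cost0)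
      also have "\<dots> = (\<Sum>t\<in>{1..<Suc T'}. \<gamma>^t * h t)"
        by (rule sum.cong) (auto simp: cost)
      finally show ?thesis using A by simp
    qed
    have "total_cost \<gamma> P \<beta> Cd NP = (SUP T. ennreal (\<Sum>t<T. \<gamma>^t * step_cost P \<beta> Cd NP t))"
      unfolding total_cost_def suminf_eq_SUP using nn by simp
    also have "\<dots> \<le> ennreal (\<gamma>*c)"
      by (rule SUP_least) (rule ennreal_leI[OF part])
    finally show ?thesis .
  qed
  have "optimal \<gamma> P \<beta> Cd NP"
    unfolding optimal_def
  proof (intro conjI allI impI feas)
    fix N' assume "feasible N'"
    show "total_cost \<gamma> P \<beta> Cd NP \<le> total_cost \<gamma> P \<beta> Cd N'"
      using upper lower_bound[OF g0 g1 P0 b0 Cd0 key, of N'] by (rule order_trans)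
  qed
  then show ?thesis using per by blast
qed

end
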